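(* Let $n,m\in\mathbb{N}$, let $p>1$, let $E_0>E_D>0$, and define $E:[0,1]\to(0,\infty)$ by $E(\delta)=\left(\frac{1-\delta}{E_0}+\frac{\delta}{E_D}\right)^{-1}$. Let $\hat{\mathbf K}_1,\dots,\hat{\mathbf K}_n\in\mathbb{R}^{m\times m}$ be symmetric positive semidefinite matrices, let $\mathbf f\in\mathbb{R}^m$, and let $\tilde{\boldsymbol\rho}\in\mathbb{R}^n$ with $\tilde\rho_e>0$ for all $e$. For $\boldsymbol\delta\in[0,1]^n$ set $\mathbf K_e(\boldsymbol\rho,\boldsymbol\delta)=\tilde\rho_e^{\,p}E(\delta_e)\hat{\mathbf K}_e$ and $\mathbf K(\boldsymbol\rho,\boldsymbol\delta)=\sum_{e=1}^n\mathbf K_e(\boldsymbol\rho,\boldsymbol\delta)$, and assume that $\mathbf K(\boldsymbol\rho,\boldsymbol\delta)$ is positive definite for all $\boldsymbol\delta\in[0,1]^n$. For $\epsilon\ge 0$ define $$\mathcal J_\epsilon(\boldsymbol\rho,\boldsymbol\delta,\mathbf u)=2\mathbf f^\top\mathbf u-\sum_{e=1}^n\mathbf u^\top\mathbf K_e(\boldsymbol\rho,\boldsymbol\delta)\mathbf u-\frac{\epsilon}{2}\|\boldsymbol\delta\|^2 .$$ Then, for fixed $\boldsymbol\rho$, the function $(\boldsymbol\delta,\mathbf u)\mapsto\mathcal J_\epsilon(\boldsymbol\rho,\boldsymbol\delta,\mathbf u)$ on $[0,1]^n\times\mathbb{R}^m$ is concave if $\epsilon=0$ and strictly concave if $\e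psilon>0$.
   Context: This is a discretized linear-elasticity compliance setting: $\hat{\mathbf K}_e$ is the element stiffness matrix of finite element $e$ for a unit material tensor, $\tilde{\boldsymbol\rho}$ is the (filtered) pseudo-density of a topology $\boldsymbol\rho$ (the dependence of $\mathbf K_e$ on $\boldsymbol\rho$ is only through $\tilde{\boldsymbol\rho}$), $p$ is the SIMP penalty exponent, and $\delta_e\in[0,1]$ is a material degradation parameter interpolating inversely between Young's moduli $E_0$ and $E_D$. *)

theory Defs
  imports "HOL-Analysis.Analysis"
begin

text \<open>Inverse (Reuss-type) interpolation of Young's moduli.\<close>
definition Emod :: "real \<Rightarrow> real \<Rightarrow> real \<Rightarrow> real" where
  "Emod E0 ED d = inverse ((1 - d) / E0 + d / ED)"

definition psd_matrix :: "real^'m^'m \<Rightarrow> bool" where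
  "psd_matrix A \<longleftrightarrow> transpose A = A \<and> (\<forall>x. 0 \<le> x \<bullet> (A *v x))"

definition pd_matrix :: "real^'m^'m \<Rightarrow> bool" where
  "pd_matrix A \<longleftrightarrow> transpose A = A \<and> (\<forall>x. x \<noteq> 0 \<longrightarrow> 0 < x \<bullet> (A *v x))"

definition strict_concave_on :: "'a::real_vector set \<Rightarrow> ('a \<Rightarrow> real) \<Rightarrow> bool" where
  "strict_concave_on S f \<longleftrightarrow> convex S \<and>
    (\<forall>x\<in>S. \<forall>y\<in>S. x \<noteq> y \<longrightarrow> (\<forall>t. 0 < t \<and> t < 1 \<longrightarrow>
        f ((1 - t) *\<^sub>R x + t *\<^sub>R y) > (1 - t) * f x + t * f y))"

definition unit_box :: "(real^'n) set" where
  "unit_box = {d. \<forall>e. 0 \<le> d $ e \<and> d $ e \<le> 1}"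

definition Kelem :: "real \<Rightarrow> real \<Rightarrow> real \<Rightarrow> ('n \<Rightarrow> real^'m^'m) \<Rightarrow> real^'n \<Rightarrow> real^'n \<Rightarrow> 'n \<Rightarrow> real^'m^'m" where
  "Kelem p E0 ED Khat rt d e = ((rt $ e) powr p * Emod E0 ED (d $ e)) *\<^sub>R Khat e"

definition Kglob :: "real \<Rightarrow> real \<Rightarrow> real \<Rightarrow> ('n::finite \<Rightarrow> real^'m^'m) \<Rightarrow> real^'n \<Rightarrow> real^'n \<Rightarrow> real^'m^'m" where
  "Kglob p E0 ED Khat rt d = (\<Sum>e\<in>UNIV. Kelem p E0 ED Khat rt d e)"

definition Jeps :: "real \<Rightarrow> real \<Rightarrow> real \<Rightarrow> real \<Rightarrow> ('n::finite \<Rightarrow> real^'m^'m) \<Rightarrow> real^'m \<Rightarrow> real^'n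
                    \<Rightarrow> real^'n \<Rightarrow> real^'m \<Rightarrow> real" where
  "Jeps eps p E0 ED Khat f rt d u =
     2 * (f \<bullet> u) - (\<Sum>e\<in>UNIV. u \<bullet> (Kelem p E0 ED Khat rt d e *v u)) - eps / 2 * (norm d)\<^sup>2"

end

theory Submission
  imports Defs
begin

lemma mv_scaleR: "(k *\<^sub>R (A::real^'n^'m)) *v x = k *\<^sub>R (A *v x)"
  by (simp add: vec_eq_iff matrix_vector_mult_def sum_distrib_left mult.assoc)

lemma mv_sum: "finite S \<Longrightarrow> (\<Sum>e\<in>S. (A e::real^'n^'m)) *v x = (\<Sum>e\<in>S. A e *v x)"
  by (induction S rule: finite_induct) (auto simp: matrix_vector_mult_add_rdistrib)

lemma mv_sym: "transpose A = A \<Longrightarrow> (y::real^'n) \<bullet> ((A::real^'n^'n) *v x) = x \<bullet> (A *v y)"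
  by (metis dot_lmul_matrix inner_commute transpose_matrix_vector)

lemma quad_expand:
  assumes "transpose A = (A::real^'n^'n)"
  shows "(a *\<^sub>R x + b *\<^sub>R y) \<bullet> (A *v (a *\<^sub>R x + b *\<^sub>R y)) =
    a\<^sup>2 * (x \<bullet> (A *v x)) + 2*a*b*(x \<bullet> (A *v y)) + b\<^sup>2 * (y \<bullet> (A *v y))"
proof -
  have l: "A *v (a *\<^sub>R x + b *\<^sub>R y) = a *\<^sub>R (A *v x) + b *\<^sub>R (A *v y)"
    using matrix_vector_mul_linear[of A] by (simp add: linear_add linear_scale)
  show ?thesis unfolding l using mv_sym[OF assms, of y x]
    by (simp add: inner_add_left inner_add_right power2_eq_square algebra_simps)
qed

lemma elem_gap:
  fixes a1 a2 t cc qa qb rr :: real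
  assumes "a1 > 0" "a2 > 0" "0 \<le> t" "t \<le> 1" "cc = (1-t)*a1 + t*a2"
  shows "((1-t)^2*qa + 2*(1-t)*t*rr + t^2*qb)/cc
     = (1-t)*qa/a1 + t*qb/a2 - t*(1-t)*(a2^2*qa - 2*a1*a2*rr + a1^2*qb)/(a1*a2*cc)"
proof -
  have "cc > 0" using assms
    by (smt (verit) mult_nonneg_nonneg mult_pos_pos)
  then show ?thesis using assms(1,2)
    apply (simp add: divide_simps)
    apply (simp add: assms(5) power2_eq_square)
    by algebra
qed

lemma norm_convex_gap:
  fixes x y :: "'a::real_inner"
  shows "(norm ((1-t) *\<^sub>R x + t *\<^sub>R y))\<^sup>2 = (1-t) * (norm x)\<^sup>2 + t * (norm y)\<^sup>2 - t*(1-t)*(norm (x - y))\<^sup>2"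
  unfolding power2_norm_eq_inner
  by (simp add: inner_add_left inner_add_right inner_diff_left inner_diff_right inner_commute algebra_simps)

lemma unit_box_convex: "convex (unit_box :: (real^'n) set)"
  unfolding convex_def unit_box_def
  by (auto intro: convex_bound_le)

theorem theorem1:
  fixes p E0 ED eps :: real
    and Khat :: "'n::finite \<Rightarrow> real^'m::finite^'m"
    and f :: "real^'m" and rt :: "real^'n"
  assumes "p > 1" and "E0 > ED" and "ED > 0"
    and "\<And>e. psd_matrix (Khat e)"
    and "\<And>e. rt $ e > 0"
    and "\<And>d. d \<in> unit_box \<Longrightarrow> pd_matrix (Kglob p E0 ED Khat rt d)"
    and "eps \<ge> 0"
  shows "(eps = 0 \<longrightarrow> concave_on (unit_box \<times> UNIV) (\<lambda>(d, u). Jeps eps p E0 ED Khat f rt d u))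
       \<and> (eps > 0 \<longrightarrow> strict_concave_on (unit_box \<times> UNIV) (\<lambda>(d, u). Jeps eps p E0 ED Khat f rt d u))"
proof -
  define Sf where "Sf = (\<lambda>x::real. (1 - x) / E0 + x / ED)"
  define c where "c = (\<lambda>e. rt $ e powr p)"
  define q where "q = (\<lambda>e (v::real^'m). v \<bullet> (Khat e *v v))"
  define J where "J = (\<lambda>d u. Jeps eps p E0 ED Khat f rt d u)"
  have E0pos: "E0 > 0" using assms by linarith
  have Sfpos: "Sf x > 0" if "0 \<le> x" "x \<le> 1" for x
  proof (cases "x \<le> 1/2")
    case True
    then have "(1 - x) / E0 > 0" using E0pos by simp
    moreover have "x / ED \<ge> 0" using that assms by simp
    ultimately show ?thesis unfolding Sf_def by linarith
  next
    case False
    then have "(1 - x) / E0 \<ge> 0" using E0pos that by simp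
    moreover have "x / ED > 0" using False assms by simp
    ultimately show ?thesis unfolding Sf_def by linarith
  qed
  have Sflin: "Sf ((1-t)*x + t*y) = (1-t) * Sf x + t * Sf y" for t x y
    unfolding Sf_def using E0pos assms(3) by (simp add: field_simps)
  have cpos: "c e > 0" for e unfolding c_def using assms(5)[of e] by simp
  have sym: "transpose (Khat e) = Khat e" for e using assms(4)[of e] by (simp add: psd_matrix_def)
  have qnn: "q e v \<ge> 0" for e v using assms(4)[of e] by (simp add: psd_matrix_def q_def)
  have w: "u \<bullet> (Kelem p E0 ED Khat rt d e *v u) = c e * q e u / Sf (d $ e)" for u d e
    by (simp add: Kelem_def mv_scaleR Emod_def c_def q_def Sf_def divide_inverse mult.commute mult.left_commute)
  have key: "\<exists>G\<ge>0. J ((1-t) *\<^sub>R d1 + t *\<^sub>R d2) ((1-t) *\<^sub>R u1 + t *\<^sub>R u2)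
      = (1-t) * J d1 u1 + t * J d2 u2 + t*(1-t)*(G + eps/2 * (norm (d1 - d2))\<^sup>2)
      \<and> (d1 = d2 \<longrightarrow> G = (u1 - u2) \<bullet> (Kglob p E0 ED Khat rt d1 *v (u1 - u2)))"
    if d1: "d1 \<in> unit_box" and d2: "d2 \<in> unit_box" and t: "0 \<le> t" "t \<le> 1" for d1 d2 u1 u2 t
  proof -
    define d where "d = (1-t) *\<^sub>R d1 + t *\<^sub>R d2"
    define u where "u = (1-t) *\<^sub>R u1 + t *\<^sub>R u2"
    define g where "g = (\<lambda>e. c e * q e (Sf (d2$e) *\<^sub>R u1 - Sf (d1$e) *\<^sub>R u2) / (Sf (d1$e) * Sf (d2$e) * Sf (d$e)))"
    have elem: "c e * q e u / Sf (d $ e) = (1-t) * (c e * q e u1 / Sf (d1 $ e)) + t * (c e * q e u2 / Sf (d2 $ e)) - t*(1-t) * g e" for e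
    proof -
      have p1: "Sf (d1$e) > 0" "Sf (d2$e) > 0" using d1 d2 unfolding unit_box_def using Sfpos by auto
      have de: "Sf (d$e) = (1-t) * Sf (d1$e) + t * Sf (d2$e)" unfolding d_def using Sflin by simp
      have qu: "q e u = (1-t)\<^sup>2 * q e u1 + 2*(1-t)*t * (u1 \<bullet> (Khat e *v u2)) + t\<^sup>2 * q e u2"
        unfolding u_def q_def using quad_expand[OF sym[of e]] by simp
      have qg: "q e (Sf (d2$e) *\<^sub>R u1 - Sf (d1$e) *\<^sub>R u2) = (Sf (d2$e))\<^sup>2 * q e u1 - 2 * Sf (d1$e) * Sf (d2$e) * (u1 \<bullet> (Khat e *v u2)) + (Sf (d1$e))\<^sup>2 * q e u2"
        using quad_expand[OF sym[of e], of "Sf (d2$e)" u1 "- Sf (d1$e)" u2] unfolding q_def by simp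
      have "q e u / Sf (d $ e) = (1-t) * q e u1 / Sf (d1 $ e) + t * q e u2 / Sf (d2 $ e) - t*(1-t) * q e (Sf (d2$e) *\<^sub>R u1 - Sf (d1$e) *\<^sub>R u2) / (Sf (d1$e) * Sf (d2$e) * Sf (d$e))"
        unfolding qu qg using elem_gap[OF p1 t de] by simp
      then have "c e * (q e u / Sf (d $ e)) = c e * ((1-t) * q e u1 / Sf (d1 $ e) + t * q e u2 / Sf (d2 $ e) - t*(1-t) * q e (Sf (d2$e) *\<^sub>R u1 - Sf (d1$e) *\<^sub>R u2) / (Sf (d1$e) * Sf (d2$e) * Sf (d$e)))"
        by simp
      then show ?thesis unfolding g_def by (simp add: algebra_simps)
    qed
    have gnn: "g e \<ge> 0" for e
    proof -
      have b1: "0 \<le> d1$e" "d1$e \<le> 1" "0 \<le> d2$e" "d2$e \<le> 1" using d1 d2 unfolding unit_box_def by auto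
      have "d$e = (1-t) * d1$e + t * d2$e" unfolding d_def by simp
      moreover have "0 \<le> (1-t) * d1$e + t * d2$e" using b1 t by simp
      moreover have "(1-t) * d1$e + t * d2$e \<le> 1" using b1 t by (intro convex_bound_le) auto
      ultimately have "Sf (d1$e) > 0" "Sf (d2$e) > 0" "Sf (d$e) > 0"
        using b1 Sfpos by auto
      then show ?thesis unfolding g_def using cpos[of e] qnn by simp
    qed
    have sumw: "(\<Sum>e\<in>UNIV. c e * q e u / Sf (d $ e)) = (1-t) * (\<Sum>e\<in>UNIV. c e * q e u1 / Sf (d1 $ e)) + t * (\<Sum>e\<in>UNIV. c e * q e u2 / Sf (d2 $ e)) - t*(1-t) * (\<Sum>e\<in>UNIV. g e)"
      unfolding elem by (simp add: sum.distrib sum_subtractf sum_distrib_left)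
    have lin: "f \<bullet> u = (1-t) * (f \<bullet> u1) + t * (f \<bullet> u2)" unfolding u_def by (simp add: inner_add_right)
    have main: "J d u = (1-t) * J d1 u1 + t * J d2 u2 + t*(1-t)*((\<Sum>e\<in>UNIV. g e) + eps/2 * (norm (d1 - d2))\<^sup>2)"
    proof -
      have nd: "(norm d)\<^sup>2 = (1-t) * (norm d1)\<^sup>2 + t * (norm d2)\<^sup>2 - t*(1-t)*(norm (d1 - d2))\<^sup>2"
        unfolding d_def by (rule norm_convex_gap)
      have "J d u = 2 * (f \<bullet> u) - (\<Sum>e\<in>UNIV. c e * q e u / Sf (d $ e)) - eps / 2 * (norm d)\<^sup>2"
        unfolding J_def Jeps_def w by simp
      also have "\<dots> = (1-t) * J d1 u1 + t * J d2 u2 + t*(1-t)*((\<Sum>e\<in>UNIV. g e) + eps/2 * (norm (d1 - d2))\<^sup>2)"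
        unfolding sumw lin nd J_def Jeps_def w by (simp add: field_simps)
      finally show ?thesis .
    qed
    have eq: "d1 = d2 \<Longrightarrow> (\<Sum>e\<in>UNIV. g e) = (u1 - u2) \<bullet> (Kglob p E0 ED Khat rt d1 *v (u1 - u2))"
    proof -
      assume "d1 = d2"
      then have dd: "d = d1" unfolding d_def by (simp add: algebra_simps flip: scaleR_add_left)
      have "g e = (u1 - u2) \<bullet> (Kelem p E0 ED Khat rt d1 e *v (u1 - u2))" for e
      proof -
        have pos: "Sf (d1$e) > 0" using d1 unfolding unit_box_def using Sfpos by auto
        have "q e (Sf (d1$e) *\<^sub>R u1 - Sf (d1$e) *\<^sub>R u2) = (Sf (d1$e))\<^sup>2 * q e (u1 - u2)"
          using quad_expand[OF sym[of e], of "Sf (d1$e)" "u1 - u2" 0 0] unfolding q_def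
          by (simp add: scaleR_diff_right)
        then show ?thesis unfolding w g_def dd \<open>d1 = d2\<close> using pos
          by (simp add: power2_eq_square)
      qed
      then show ?thesis unfolding Kglob_def by (simp add: mv_sum inner_sum_right)
    qed
    show ?thesis
      apply (rule exI[of _ "\<Sum>e\<in>UNIV. g e"])
      using main eq gnn by (auto simp: d_def u_def intro: sum_nonneg)
  qed
  have cvx: "convex (unit_box \<times> (UNIV :: (real^'m) set))"
    by (intro convex_Times unit_box_convex convex_UNIV)
  show ?thesis
  proof (intro conjI impI)
    assume "eps = 0"
    show "concave_on (unit_box \<times> UNIV) (\<lambda>(d, u). Jeps eps p E0 ED Khat f rt d u)"
      unfolding concave_on_iff
    proof (intro conjI cvx ballI allI impI)
      fix x y :: "(real^'n) \<times> (real^'m)" and a b :: real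
      assume x: "x \<in> unit_box \<times> UNIV" and y: "y \<in> unit_box \<times> UNIV" and a: "0 \<le> a" and b: "0 \<le> b" and ab: "a + b = 1"
      obtain d1 u1 where x': "x = (d1, u1)" by (cases x)
      obtain d2 u2 where y': "y = (d2, u2)" by (cases y)
      have "a = 1 - b" using ab by simp
      from key[of d1 d2 b u1 u2] x y b ab a obtain G where "G \<ge> 0" and
        "J ((1-b) *\<^sub>R d1 + b *\<^sub>R d2) ((1-b) *\<^sub>R u1 + b *\<^sub>R u2)
      = (1-b) * J d1 u1 + b * J d2 u2 + b*(1-b)*(G + eps/2 * (norm (d1 - d2))\<^sup>2)"
        by (auto simp: x' y')
      moreover have "b*(1-b)*(G + eps/2 * (norm (d1 - d2))\<^sup>2) \<ge> 0"
        using \<open>G \<ge> 0\<close> \<open>eps = 0\<close> a b \<open>a = 1 - b\<close> by simp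
      ultimately show "a * (case x of (d, u) \<Rightarrow> Jeps eps p E0 ED Khat f rt d u) + b * (case y of (d, u) \<Rightarrow> Jeps eps p E0 ED Khat f rt d u)
           \<le> (case a *\<^sub>R x + b *\<^sub>R y of (d, u) \<Rightarrow> Jeps eps p E0 ED Khat f rt d u)"
        unfolding x' y' \<open>a = 1 - b\<close> J_def by simp
    qed
  next
    assume eps: "eps > 0"
    show "strict_concave_on (unit_box \<times> UNIV) (\<lambda>(d, u). Jeps eps p E0 ED Khat f rt d u)"
      unfolding strict_concave_on_def
    proof (intro conjI cvx ballI allI impI)
      fix x y :: "(real^'n) \<times> (real^'m)" and t :: real
      assume x: "x \<in> unit_box \<times> UNIV" and y: "y \<in> unit_box \<times> UNIV" and xy: "x \<noteq> y" and t: "0 < t \<and> t < 1"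
      obtain d1 u1 where x': "x = (d1, u1)" by (cases x)
      obtain d2 u2 where y': "y = (d2, u2)" by (cases y)
      from key[of d1 d2 t u1 u2] x y t obtain G where G: "G \<ge> 0" and
        main: "J ((1-t) *\<^sub>R d1 + t *\<^sub>R d2) ((1-t) *\<^sub>R u1 + t *\<^sub>R u2)
      = (1-t) * J d1 u1 + t * J d2 u2 + t*(1-t)*(G + eps/2 * (norm (d1 - d2))\<^sup>2)"
        and Geq: "d1 = d2 \<longrightarrow> G = (u1 - u2) \<bullet> (Kglob p E0 ED Khat rt d1 *v (u1 - u2))"
        by (auto simp: x' y')
      have pos: "G + eps/2 * (norm (d1 - d2))\<^sup>2 > 0"
      proof (cases "d1 = d2")
        case True
        then have "u1 \<noteq> u2" using xy x' y' by simp
        moreover have "d1 \<in> unit_box" using x x' by simp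
        ultimately have "G > 0" using Geq True assms(6)[of d1] by (simp add: pd_matrix_def)
        then show ?thesis using eps True by simp
      next
        case False
        then have "norm (d1 - d2) > 0" by simp
        then have "eps/2 * (norm (d1 - d2))\<^sup>2 > 0" using eps by simp
        then show ?thesis using G by simp
      qed
      have "t*(1-t)*(G + eps/2 * (norm (d1 - d2))\<^sup>2) > 0" using t pos by simp
      then show "(1 - t) * (case x of (d, u) \<Rightarrow> Jeps eps p E0 ED Khat f rt d u) + t * (case y of (d, u) \<Rightarrow> Jeps eps p E0 ED Khat f rt d u)
           < (case (1 - t) *\<^sub>R x + t *\<^sub>R y of (d, u) \<Rightarrow> Jeps eps p E0 ED Khat f rt d u)"
        using main unfolding x' y' J_def by simp
    qed
  qed
qed

end
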